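(* Let $R$ be a commutative ring, $I=(f_1,\dots,f_r)$, $\mathfrak a=(a_1,\dots,a_s)\subseteq I$, $\Phi=(c_{ij})$ an $r\times s$ matrix with $a_j=\sum_ic_{ij}f_i$, $\Gamma_\bullet$ as in the context, and $B_\bullet=B_\bullet(\mathbf f;R)$ the Koszul boundaries. Then $\langle\Gamma_\bullet\cdot B_\bullet\rangle_r=\mathfrak a$.
   Context: $K_\bullet(\mathbf f;R)$ is the Koszul DG algebra: exterior algebra over $R$ on $e_1,\dots,e_r$ with $\partial e_i=f_i$; $B_k=\partial(K_{k+1})$. $\zeta_j=\sum_ic_{ij}e_i$ and $\Gamma_\bullet$ is the $R$-subalgebra generated by $\zeta_1,\dots,\zeta_s$. $\langle\Gamma_\bullet\cdot B_\bullet\rangle_r$ is the $R$-span in $K_r$ of the products $\gamma\wedge b$ with $\gamma\in\Gamma_j$, $b\in B_{r-j}$, identified with an ideal of $R$ via $K_r=Re_1\wedge\cdots\wedge e_r\cong R$. *)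

theory Defs
  imports Main
begin

text \<open>Exterior algebra over a commutative ring R on generators e_0,...,e_{r-1}:
  an element is a coefficient function on finite index sets U (U stands for the
  basis monomial e_{u_1} wedge ... wedge e_{u_k} with u_1 < ... < u_k).\<close>

type_synonym 'a ext = "nat set \<Rightarrow> 'a"

definition ext_sign :: "nat set \<Rightarrow> nat set \<Rightarrow> 'a::comm_ring_1" where
  "ext_sign S T = (-1) ^ card {(i, j). i \<in> S \<and> j \<in> T \<and> j < i}"

text \<open>e_S wedge e_T = ext_sign S T e_{S \<union> T} for disjoint S, T, and 0 otherwise.\<close>
definition wedge :: "'a::comm_ring_1 ext \<Rightarrow> 'a ext \<Rightarrow> 'a ext" where
  "wedge x y = (\<lambda>U. \<Sum>S\<in>Pow U. ext_sign S (U - S) * x S * y (U - S))"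

definition ext_one :: "'a::comm_ring_1 ext" where
  "ext_one = (\<lambda>U. if U = {} then 1 else 0)"

definition ext_gen :: "nat \<Rightarrow> 'a::comm_ring_1 ext" where
  "ext_gen i = (\<lambda>U. if U = {i} then 1 else 0)"

definition ext_smult :: "'a::comm_ring_1 \<Rightarrow> 'a ext \<Rightarrow> 'a ext" where
  "ext_smult c x = (\<lambda>U. c * x U)"

definition koszul :: "nat \<Rightarrow> nat \<Rightarrow> 'a::comm_ring_1 ext set" where
  "koszul r k = {x. \<forall>U. x U \<noteq> 0 \<longrightarrow> U \<subseteq> {..<r} \<and> card U = k}"

text \<open>Koszul differential: d e_i = f_i, extended as a graded derivation, i.e.
  d(e_S) = sum_{i in S} (-1)^{#{j in S. j < i}} f_i e_{S - {i}}.\<close>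
definition koszul_d :: "nat \<Rightarrow> (nat \<Rightarrow> 'a::comm_ring_1) \<Rightarrow> 'a ext \<Rightarrow> 'a ext" where
  "koszul_d r f x = (\<lambda>U. \<Sum>i\<in>{..<r} - U. (-1) ^ card {j\<in>U. j < i} * f i * x (insert i U))"

definition koszul_B :: "nat \<Rightarrow> (nat \<Rightarrow> 'a::comm_ring_1) \<Rightarrow> nat \<Rightarrow> 'a ext set" where
  "koszul_B r f k = koszul_d r f ` koszul r (Suc k)"

definition zeta :: "nat \<Rightarrow> (nat \<Rightarrow> nat \<Rightarrow> 'a::comm_ring_1) \<Rightarrow> nat \<Rightarrow> 'a ext" where
  "zeta r c j = (\<lambda>U. \<Sum>i<r. c i j * ext_gen i U)"

inductive_set Gamma_alg :: "nat \<Rightarrow> nat \<Rightarrow> (nat \<Rightarrow> nat \<Rightarrow> 'a::comm_ring_1) \<Rightarrow> 'a ext set"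
  for r s c where
  one: "ext_one \<in> Gamma_alg r s c"
| gen: "j < s \<Longrightarrow> zeta r c j \<in> Gamma_alg r s c"
| add: "x \<in> Gamma_alg r s c \<Longrightarrow> y \<in> Gamma_alg r s c \<Longrightarrow> (\<lambda>U. x U + y U) \<in> Gamma_alg r s c"
| smult: "x \<in> Gamma_alg r s c \<Longrightarrow> ext_smult a x \<in> Gamma_alg r s c"
| mult: "x \<in> Gamma_alg r s c \<Longrightarrow> y \<in> Gamma_alg r s c \<Longrightarrow> wedge x y \<in> Gamma_alg r s c"

definition Gamma :: "nat \<Rightarrow> nat \<Rightarrow> (nat \<Rightarrow> nat \<Rightarrow> 'a::comm_ring_1) \<Rightarrow> nat \<Rightarrow> 'a ext set" where
  "Gamma r s c j = Gamma_alg r s c \<inter> koszul r j"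

definition ext_span :: "'a::comm_ring_1 ext set \<Rightarrow> 'a ext set" where
  "ext_span S = {(\<lambda>U. \<Sum>i<n. a i * g i U) | (n::nat) (a::nat \<Rightarrow> 'a) g. \<forall>i<n. g i \<in> S}"

definition ideal_gen :: "'a::comm_ring_1 set \<Rightarrow> 'a set" where
  "ideal_gen S = {(\<Sum>i<n. a i * g i) | (n::nat) (a::nat \<Rightarrow> 'a) g. \<forall>i<n. g i \<in> S}"

text \<open>The R-span in K_r of the products gamma wedge b with gamma in Gamma_j, b in B_{r-j},
  identified with an ideal of R via K_r = R e_0 wedge ... wedge e_{r-1}.\<close>
definition GammaB_top :: "nat \<Rightarrow> nat \<Rightarrow> (nat \<Rightarrow> 'a::comm_ring_1) \<Rightarrow> (nat \<Rightarrow> nat \<Rightarrow> 'a) \<Rightarrow> 'a set" where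
  "GammaB_top r s f c =
     (\<lambda>x. x {..<r}) ` ext_span {wedge g b | g b j. j \<le> r \<and> g \<in> Gamma r s c j \<and> b \<in> koszul_B r f (r - j)}"

end

theory Submission
  imports Defs
begin

definition inv_cnt :: "nat set \<Rightarrow> nat set \<Rightarrow> nat" where
  "inv_cnt S T = card {(i, j). i \<in> S \<and> j \<in> T \<and> j < i}"

lemma ext_sign_inv: "ext_sign S T = (-1) ^ inv_cnt S T"
  by (simp add: ext_sign_def inv_cnt_def)

lemma L1:
  assumes "finite S" "finite T" "i \<notin> S"
  shows "inv_cnt (insert i S) T = inv_cnt S T + card {j\<in>T. j < i}"
proof -
  have e: "{(i', j). i' \<in> insert i S \<and> j \<in> T \<and> j < i'} =
     {(i', j). i' \<in> S \<and> j \<in> T \<and> j < i'} \<union> Pair i ` {j\<in>T. j < i}" by auto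
  have f1: "finite {(i', j). i' \<in> S \<and> j \<in> T \<and> j < i'}"
    by (rule finite_subset[of _ "S \<times> T"]) (use assms in auto)
  have d: "{(i', j). i' \<in> S \<and> j \<in> T \<and> j < i'} \<inter> Pair i ` {j\<in>T. j < i} = {}"
    using assms by auto
  show ?thesis unfolding inv_cnt_def e
    by (subst card_Un_disjoint[OF f1 _ d]) (use assms in \<open>auto simp: card_image inj_on_def\<close>)
qed

lemma L2:
  assumes "finite S" "finite T" "i \<notin> T"
  shows "inv_cnt S (insert i T) = inv_cnt S T + card {j\<in>S. i < j}"
proof -
  have e: "{(i', j). i' \<in> S \<and> j \<in> insert i T \<and> j < i'} =
     {(i', j). i' \<in> S \<and> j \<in> T \<and> j < i'} \<union> (\<lambda>j. (j, i)) ` {j\<in>S. i < j}" by auto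
  have f1: "finite {(i', j). i' \<in> S \<and> j \<in> T \<and> j < i'}"
    by (rule finite_subset[of _ "S \<times> T"]) (use assms in auto)
  have d: "{(i', j). i' \<in> S \<and> j \<in> T \<and> j < i'} \<inter> (\<lambda>j. (j, i)) ` {j\<in>S. i < j} = {}"
    using assms by auto
  show ?thesis unfolding inv_cnt_def e
    by (subst card_Un_disjoint[OF f1 _ d]) (use assms in \<open>auto simp: card_image inj_on_def\<close>)
qed

lemma L3:
  fixes S :: "nat set"
  assumes "finite S" "finite T" "S \<inter> T = {}"
  shows "card {j\<in>S \<union> T. j < i} = card {j\<in>S. j < i} + card {j\<in>T. j < i}"
proof -
  have "{j\<in>S \<union> T. j < i} = {j\<in>S. j < i} \<union> {j\<in>T. j < i}" by auto
  then show ?thesis using assms by (simp add: card_Un_disjoint disjoint_iff)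
qed

lemma L4:
  fixes S :: "nat set"
  assumes "finite S" "i \<notin> S"
  shows "card S = card {j\<in>S. j < i} + card {j\<in>S. i < j}"
proof -
  have "S = {j\<in>S. j < i} \<union> {j\<in>S. i < j}" using assms by (auto simp: set_eq_iff) (metis linorder_neqE_nat)
  then have "card S = card ({j\<in>S. j < i} \<union> {j\<in>S. i < j})" by simp
  also have "\<dots> = card {j\<in>S. j < i} + card {j\<in>S. i < j}"
    using assms by (intro card_Un_disjoint) auto
  finally show ?thesis .
qed

lemma neg1_eq: "even (m + n) \<Longrightarrow> (-1::'a::comm_ring_1) ^ m = (-1) ^ n"
  by (metis neg_one_even_power neg_one_odd_power odd_add)

definition eps :: "nat \<Rightarrow> nat set \<Rightarrow> 'a::comm_ring_1" where
  "eps i S = (-1) ^ card {j\<in>S. j < i}"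

lemma E1:
  assumes "finite U" "S \<subseteq> U" "i \<notin> U"
  shows "eps i U * ext_sign (insert i S) (U - S) = ext_sign S (U - S) * (eps i S :: 'a::comm_ring_1)"
proof -
  have fS: "finite S" using assms finite_subset by blast
  have u: "U = S \<union> (U - S)" using assms by auto
  have c: "card {j\<in>U. j < i} = card {j\<in>S. j < i} + card {j\<in>U - S. j < i}"
    by (subst u, rule L3) (use assms fS in auto)
  have l1: "inv_cnt (insert i S) (U - S) = inv_cnt S (U - S) + card {j\<in>U - S. j < i}"
    using assms fS by (intro L1) auto
  show ?thesis unfolding eps_def ext_sign_inv power_add[symmetric] l1 c
    by (rule neg1_eq) presburger
qed

lemma E2:
  assumes "finite U" "S \<subseteq> U" "i \<notin> U"
  shows "eps i U * ext_sign S (insert i (U - S)) = ext_sign S (U - S) * (-1) ^ card S * (eps i (U - S) :: 'a::comm_ring_1)"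
proof -
  have fS: "finite S" using assms finite_subset by blast
  have u: "U = S \<union> (U - S)" using assms by auto
  have c: "card {j\<in>U. j < i} = card {j\<in>S. j < i} + card {j\<in>U - S. j < i}"
    by (subst u, rule L3) (use assms fS in auto)
  have l2: "inv_cnt S (insert i (U - S)) = inv_cnt S (U - S) + card {j\<in>S. i < j}"
    using assms fS by (intro L2) auto
  have l4: "card S = card {j\<in>S. j < i} + card {j\<in>S. i < j}"
    using assms fS by (intro L4) auto
  show ?thesis unfolding eps_def ext_sign_inv power_add[symmetric] l2 c l4
    by (rule neg1_eq) presburger
qed

lemma E3:
  assumes "finite U" "S \<subseteq> U" "i \<in> U" "i \<notin> S"
  shows "ext_sign (insert i S) (U - S - {i}) * (-1) ^ card (insert i S) * eps i (U - S - {i})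
     = - (ext_sign S (U - S) * (eps i S :: 'a::comm_ring_1))"
proof -
  have fS: "finite S" using assms finite_subset by blast
  have u: "U - S = insert i (U - S - {i})" using assms by auto
  have l1: "inv_cnt (insert i S) (U - S - {i}) = inv_cnt S (U - S - {i}) + card {j\<in>U - S - {i}. j < i}"
    using assms fS by (intro L1) auto
  have l2: "inv_cnt S (U - S) = inv_cnt S (U - S - {i}) + card {j\<in>S. i < j}"
    using assms fS by (subst u, intro L2) auto
  have l4: "card S = card {j\<in>S. j < i} + card {j\<in>S. i < j}"
    using assms fS by (intro L4) auto
  have ci: "card (insert i S) = Suc (card S)" using fS assms by simp
  have "ext_sign (insert i S) (U - S - {i}) * (-1) ^ card (insert i S) * eps i (U - S - {i})
     = (-1::'a) ^ Suc (inv_cnt S (U - S - {i}) + card {j\<in>S. j < i} + card {j\<in>S. i < j})"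
    unfolding eps_def ext_sign_inv ci l1 l4 power_add[symmetric]
    by (rule neg1_eq) presburger
  also have "\<dots> = - (ext_sign S (U - S) * (eps i S :: 'a::comm_ring_1))"
    unfolding eps_def ext_sign_inv l2 power_add[symmetric] by (simp add: ac_simps)
  finally show ?thesis .
qed


definition sigma :: "'a::comm_ring_1 ext \<Rightarrow> 'a ext" where
  "sigma x = (\<lambda>U. (-1) ^ card U * x U)"

lemma kd_eps: "koszul_d r f x U = (\<Sum>i\<in>{..<r} - U. eps i U * f i * x (insert i U))"
  by (simp add: koszul_d_def eps_def)

lemma wedge_infinite: "infinite U \<Longrightarrow> wedge x y U = 0"
  by (simp add: wedge_def)

lemma wedge_insert:
  assumes "finite U" "i \<notin> U"
  shows "wedge x y (insert i U) =
    (\<Sum>S\<in>Pow U. ext_sign S (insert i (U - S)) * x S * y (insert i (U - S))) +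
    (\<Sum>S\<in>Pow U. ext_sign (insert i S) (U - S) * x (insert i S) * y (U - S))"
proof -
  have d: "Pow U \<inter> insert i ` Pow U = {}" using assms by auto
  have inj: "inj_on (insert i) (Pow U)" using assms unfolding inj_on_def by (auto simp: Pow_def)
  have "wedge x y (insert i U) = (\<Sum>S\<in>Pow U. ext_sign S (insert i U - S) * x S * y (insert i U - S)) +
    (\<Sum>S\<in>insert i ` Pow U. ext_sign S (insert i U - S) * x S * y (insert i U - S))"
    unfolding wedge_def Pow_insert using assms d by (subst sum.union_disjoint) auto
  also have "\<dots> = (\<Sum>S\<in>Pow U. ext_sign S (insert i (U - S)) * x S * y (insert i (U - S))) +
    (\<Sum>S\<in>Pow U. ext_sign (insert i S) (U - S) * x (insert i S) * y (U - S))"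
  proof -
    have 1: "insert i U - S = insert i (U - S)" if "S \<in> Pow U" for S using that assms by auto
    have 2: "insert i U - insert i S = U - S" if "S \<in> Pow U" for S using that assms by auto
    show ?thesis
      unfolding sum.reindex[OF inj] o_def
      by (intro arg_cong2[where f="(+)"] sum.cong refl) (use assms in \<open>auto simp: 1 2 Diff_insert2[symmetric]\<close>)
  qed
  finally show ?thesis .
qed

lemma leibniz_fin:
  fixes x y :: "'a::comm_ring_1 ext"
  assumes fU: "finite U"
  shows "koszul_d r f (wedge x y) U = wedge (koszul_d r f x) y U + wedge (sigma x) (koszul_d r f y) U"
proof -
  define A where "A = {..<r::nat}"
  define T1 where "T1 i S = ext_sign S (U - S) * eps i S * f i * x (insert i S) * y (U - S)" for i S
  define T2 where "T2 i S = ext_sign S (U - S) * (-1) ^ card S * x S * eps i (U - S) * f i * y (insert i (U - S))" for i S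
  have fA: "finite A" by (simp add: A_def)
  have fP: "finite (Pow U)" using fU by simp
  have LHS: "koszul_d r f (wedge x y) U = (\<Sum>i\<in>A - U. \<Sum>S\<in>Pow U. T2 i S + T1 i S)"
  proof -
    have "eps i U * f i * wedge x y (insert i U) = (\<Sum>S\<in>Pow U. T2 i S + T1 i S)" if i: "i \<notin> U" for i
    proof -
      have a: "eps i U * f i * (ext_sign S (insert i (U - S)) * x S * y (insert i (U - S))) = T2 i S"
        if "S \<in> Pow U" for S
      proof -
        have "eps i U * f i * (ext_sign S (insert i (U - S)) * x S * y (insert i (U - S)))
          = (eps i U * ext_sign S (insert i (U - S))) * (f i * x S * y (insert i (U - S)))"
          by (simp add: ac_simps)
        also have "\<dots> = (ext_sign S (U - S) * (-1) ^ card S * eps i (U - S)) * (f i * x S * y (insert i (U - S)))"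
          using E2[OF fU _ i, of S, where 'a='a] that by simp
        finally show ?thesis unfolding T2_def by (simp add: ac_simps)
      qed
      have b: "eps i U * f i * (ext_sign (insert i S) (U - S) * x (insert i S) * y (U - S)) = T1 i S"
        if "S \<in> Pow U" for S
        using E1[OF fU _ i, of S, where 'a='a] that unfolding T1_def
        by (simp add: algebra_simps)
      show ?thesis
        unfolding wedge_insert[OF fU i] distrib_left sum_distrib_left sum.distrib
        using a b by simp
    qed
    then show ?thesis unfolding kd_eps A_def by (intro sum.cong) auto
  qed
  have R1: "wedge (koszul_d r f x) y U = (\<Sum>S\<in>Pow U. \<Sum>i\<in>A - U. T1 i S) + (\<Sum>S\<in>Pow U. \<Sum>i\<in>A \<inter> (U - S). T1 i S)"
  proof -
    have "ext_sign S (U - S) * koszul_d r f x S * y (U - S) = (\<Sum>i\<in>A - U. T1 i S) + (\<Sum>i\<in>A \<inter> (U - S). T1 i S)"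
      if "S \<in> Pow U" for S
    proof -
      have e: "A - S = (A - U) \<union> (A \<inter> (U - S))" using that by auto
      have "ext_sign S (U - S) * koszul_d r f x S * y (U - S) = (\<Sum>i\<in>A - S. T1 i S)"
        unfolding kd_eps T1_def A_def sum_distrib_left sum_distrib_right
        by (intro sum.cong) (auto simp: ac_simps)
      also have "\<dots> = (\<Sum>i\<in>A - U. T1 i S) + (\<Sum>i\<in>A \<inter> (U - S). T1 i S)"
        unfolding e using fA that by (intro sum.union_disjoint) auto
      finally show ?thesis .
    qed
    then show ?thesis unfolding wedge_def sum.distrib[symmetric] by (intro sum.cong) auto
  qed
  have R2: "wedge (sigma x) (koszul_d r f y) U = (\<Sum>S\<in>Pow U. \<Sum>i\<in>A - U. T2 i S) + (\<Sum>S\<in>Pow U. \<Sum>i\<in>A \<inter> S. T2 i S)"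
  proof -
    have "ext_sign S (U - S) * sigma x S * koszul_d r f y (U - S) = (\<Sum>i\<in>A - U. T2 i S) + (\<Sum>i\<in>A \<inter> S. T2 i S)"
      if "S \<in> Pow U" for S
    proof -
      have e: "A - (U - S) = (A - U) \<union> (A \<inter> S)" using that by auto
      have "ext_sign S (U - S) * sigma x S * koszul_d r f y (U - S) = (\<Sum>i\<in>A - (U - S). T2 i S)"
        unfolding kd_eps T2_def A_def sigma_def sum_distrib_left sum_distrib_right
        by (intro sum.cong) (auto simp: ac_simps)
      also have "\<dots> = (\<Sum>i\<in>A - U. T2 i S) + (\<Sum>i\<in>A \<inter> S. T2 i S)"
        unfolding e using fA that by (intro sum.union_disjoint) auto
      finally show ?thesis .
    qed
    then show ?thesis unfolding wedge_def sum.distrib[symmetric] by (intro sum.cong) auto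
  qed
  have Z: "(\<Sum>S\<in>Pow U. \<Sum>i\<in>A \<inter> (U - S). T1 i S) + (\<Sum>S\<in>Pow U. \<Sum>i\<in>A \<inter> S. T2 i S) = 0"
  proof -
    have z1: "(\<Sum>S\<in>Pow U. \<Sum>i\<in>A \<inter> (U - S). T1 i S) = (\<Sum>i\<in>A \<inter> U. \<Sum>S\<in>{S\<in>Pow U. i \<notin> S}. T1 i S)"
    proof -
      have "(\<Sum>S\<in>Pow U. \<Sum>i\<in>A \<inter> (U - S). T1 i S) = (\<Sum>S\<in>Pow U. \<Sum>i\<in>A \<inter> U. if i \<notin> S then T1 i S else 0)"
      proof (rule sum.cong[OF refl])
        fix S assume "S \<in> Pow U"
        have ee: "A \<inter> (U - S) = {i\<in>A \<inter> U. i \<notin> S}" by auto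
        show "(\<Sum>i\<in>A \<inter> (U - S). T1 i S) = (\<Sum>i\<in>A \<inter> U. if i \<notin> S then T1 i S else 0)"
          unfolding ee by (rule sum.inter_filter) (use fA in auto)
      qed
      also have "\<dots> = (\<Sum>i\<in>A \<inter> U. \<Sum>S\<in>Pow U. if i \<notin> S then T1 i S else 0)"
        by (rule sum.swap)
      also have "\<dots> = (\<Sum>i\<in>A \<inter> U. \<Sum>S\<in>{S\<in>Pow U. i \<notin> S}. T1 i S)"
        by (intro sum.cong refl sum.inter_filter[symmetric] fP)
      finally show ?thesis .
    qed
    have z2: "(\<Sum>S\<in>Pow U. \<Sum>i\<in>A \<inter> S. T2 i S) = (\<Sum>i\<in>A \<inter> U. \<Sum>S\<in>{S\<in>Pow U. i \<in> S}. T2 i S)"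
    proof -
      have "(\<Sum>S\<in>Pow U. \<Sum>i\<in>A \<inter> S. T2 i S) = (\<Sum>S\<in>Pow U. \<Sum>i\<in>A \<inter> U. if i \<in> S then T2 i S else 0)"
      proof (rule sum.cong[OF refl])
        fix S assume "S \<in> Pow U"
        then have ee: "A \<inter> S = {i\<in>A \<inter> U. i \<in> S}" by auto
        show "(\<Sum>i\<in>A \<inter> S. T2 i S) = (\<Sum>i\<in>A \<inter> U. if i \<in> S then T2 i S else 0)"
          unfolding ee by (rule sum.inter_filter) (use fA in auto)
      qed
      also have "\<dots> = (\<Sum>i\<in>A \<inter> U. \<Sum>S\<in>Pow U. if i \<in> S then T2 i S else 0)"
        by (rule sum.swap)
      also have "\<dots> = (\<Sum>i\<in>A \<inter> U. \<Sum>S\<in>{S\<in>Pow U. i \<in> S}. T2 i S)"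
        by (intro sum.cong refl sum.inter_filter[symmetric] fP)
      finally show ?thesis .
    qed
    have z3: "(\<Sum>S\<in>{S\<in>Pow U. i \<in> S}. T2 i S) = - (\<Sum>S\<in>{S\<in>Pow U. i \<notin> S}. T1 i S)"
      if iU: "i \<in> U" for i
    proof -
      have im: "{S\<in>Pow U. i \<in> S} = insert i ` {S\<in>Pow U. i \<notin> S}"
      proof
        show "{S\<in>Pow U. i \<in> S} \<subseteq> insert i ` {S\<in>Pow U. i \<notin> S}"
        proof
          fix S assume "S \<in> {S\<in>Pow U. i \<in> S}"
          then have "S = insert i (S - {i})" "S - {i} \<in> {S\<in>Pow U. i \<notin> S}" by auto
          then show "S \<in> insert i ` {S\<in>Pow U. i \<notin> S}" by blast
        qed
      qed (use iU in auto)
      have inj: "inj_on (insert i) {S\<in>Pow U. i \<notin> S}"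
        unfolding inj_on_def by (metis (mono_tags, lifting) Diff_insert_absorb mem_Collect_eq)
      have t: "T2 i (insert i S) = - T1 i S" if "S \<in> {S\<in>Pow U. i \<notin> S}" for S
      proof -
        have S: "S \<subseteq> U" "i \<notin> S" using that by auto
        have u1: "U - insert i S = U - S - {i}" by auto
        have u2: "insert i (U - S - {i}) = U - S" using S iU by auto
        show ?thesis
          unfolding T2_def T1_def u1 u2 using E3[OF fU S(1) iU S(2), where 'a='a]
          by (simp add: algebra_simps)
      qed
      show ?thesis unfolding im sum.reindex[OF inj] sum_negf[symmetric]
        using t by (intro sum.cong) auto
    qed
    show ?thesis unfolding z1 z2 sum.distrib[symmetric]
      by (rule sum.neutral) (use z3 in auto)
  qed
  have "(\<Sum>i\<in>A - U. \<Sum>S\<in>Pow U. T2 i S + T1 i S) = (\<Sum>S\<in>Pow U. \<Sum>i\<in>A - U. T1 i S) + (\<Sum>S\<in>Pow U. \<Sum>i\<in>A - U. T2 i S)"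
    by (simp add: sum.distrib sum.swap[of _ "A - U"])
  then show ?thesis unfolding LHS R1 R2 using Z by (simp add: algebra_simps)
qed


lemma leibniz:
  fixes x y :: "'a::comm_ring_1 ext"
  shows "koszul_d r f (wedge x y) U = wedge (koszul_d r f x) y U + wedge (sigma x) (koszul_d r f y) U"
proof (cases "finite U")
  case True then show ?thesis by (rule leibniz_fin)
next
  case False
  then show ?thesis by (simp add: wedge_infinite kd_eps)
qed

lemma ideal_0: "0 \<in> ideal_gen G"
  unfolding ideal_gen_def by (rule CollectI, rule exI[of _ 0]) auto

lemma ideal_add_gen:
  fixes G :: "'a::comm_ring_1 set"
  shows "x \<in> ideal_gen G \<Longrightarrow> g \<in> G \<Longrightarrow> x + c * g \<in> ideal_gen G"
proof -
  assume "x \<in> ideal_gen G" "g \<in> G"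
  then obtain n and a h :: "nat \<Rightarrow> 'a" where x: "x = (\<Sum>i<n. a i * h i)" "\<forall>i<n. h i \<in> G" unfolding ideal_gen_def by blast
  have "x + c * g = (\<Sum>i<Suc n. (a(n := c)) i * (h(n := g)) i)"
    unfolding x by (simp add: sum.lessThan_Suc)
  moreover have "\<forall>i<Suc n. (h(n := g)) i \<in> G" using x \<open>g \<in> G\<close> by (auto simp: less_Suc_eq)
  ultimately show ?thesis unfolding ideal_gen_def by blast
qed

lemma ideal_add:
  fixes G :: "'a::comm_ring_1 set"
  shows "x \<in> ideal_gen G \<Longrightarrow> y \<in> ideal_gen G \<Longrightarrow> x + y \<in> ideal_gen G"
proof -
  assume x: "x \<in> ideal_gen G" and "y \<in> ideal_gen G"
  then obtain n and a h :: "nat \<Rightarrow> 'a" where y: "y = (\<Sum>i<n. a i * h i)" "\<forall>i<n. h i \<in> G" unfolding ideal_gen_def by blast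
  have "\<forall>m\<le>n. x + (\<Sum>i<m. a i * h i) \<in> ideal_gen G"
  proof (intro allI impI)
    fix m assume "m \<le> n" then show "x + (\<Sum>i<m. a i * h i) \<in> ideal_gen G"
    proof (induction m)
      case 0 then show ?case using x by simp
    next
      case (Suc m)
      then have "x + (\<Sum>i<m. a i * h i) + a m * h m \<in> ideal_gen G"
        using y by (intro ideal_add_gen) auto
      then show ?case by (simp add: add.assoc)
    qed
  qed
  then show ?thesis using y by auto
qed

lemma ideal_mult:
  fixes G :: "'a::comm_ring_1 set"
  shows "x \<in> ideal_gen G \<Longrightarrow> c * x \<in> ideal_gen G"
proof -
  assume "x \<in> ideal_gen G"
  then obtain n and a h :: "nat \<Rightarrow> 'a" where x: "x = (\<Sum>i<n. a i * h i)" "\<forall>i<n. h i \<in> G" unfolding ideal_gen_def by blast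
  define a' where "a' = (\<lambda>i. c * a i)"
  have "c * x = (\<Sum>i<n. a' i * h i)" unfolding x sum_distrib_left a'_def by (simp add: ac_simps)
  then show ?thesis using x unfolding ideal_gen_def by blast
qed

lemma ideal_mult': "x \<in> ideal_gen G \<Longrightarrow> x * c \<in> ideal_gen G"
  using ideal_mult[of x G c] by (simp add: ac_simps)

lemma ideal_sum: "(\<And>i. i \<in> I \<Longrightarrow> h i \<in> ideal_gen G) \<Longrightarrow> sum h I \<in> ideal_gen G"
proof (induction I rule: infinite_finite_induct)
  case (infinite A) then show ?case by (simp add: ideal_0)
next
  case empty then show ?case by (simp add: ideal_0)
next
  case (insert x F) then show ?case by (simp add: ideal_add)
qed

lemma ideal_base: "g \<in> G \<Longrightarrow> g \<in> ideal_gen G"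
  using ideal_add_gen[OF ideal_0, of g G 1] by simp

lemma wedge_left: "(\<And>U. x U \<in> ideal_gen G) \<Longrightarrow> wedge x y U \<in> ideal_gen G"
  unfolding wedge_def
  by (intro ideal_sum) (metis ideal_mult ideal_mult' mult.assoc)

lemma wedge_right: "(\<And>U. y U \<in> ideal_gen G) \<Longrightarrow> wedge x y U \<in> ideal_gen G"
  unfolding wedge_def
  by (intro ideal_sum) (metis ideal_mult)

lemma wedge_smult: "wedge (ext_smult c x) y U = c * wedge x y U"
  unfolding wedge_def ext_smult_def sum_distrib_left by (simp add: ac_simps)

lemma zeta_single: "l < r \<Longrightarrow> zeta r c j {l} = c l j"
proof -
  assume l: "l < r"
  have "zeta r c j {l} = (\<Sum>i<r. if i = l then c i j else 0)"
    unfolding zeta_def ext_gen_def by (intro sum.cong) auto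
  then show ?thesis using l by simp
qed

lemma d_Gamma:
  assumes a: "\<forall>j<s. a j = (\<Sum>i<r. c i j * f i)"
  assumes "g \<in> Gamma_alg r s c"
  shows "koszul_d r f g U \<in> ideal_gen (a ` {..<s})"
  using assms(2)
proof (induction arbitrary: U)
  case one
  then show ?case by (simp add: koszul_d_def ext_one_def ideal_0)
next
  case (gen j)
  show ?case
  proof (cases "U = {}")
    case True
    have "koszul_d r f (zeta r c j) U = (\<Sum>i<r. c i j * f i)"
      unfolding True koszul_d_def by (intro sum.cong) (auto simp: zeta_single)
    then show ?thesis using a gen by (auto intro: ideal_base)
  next
    case False
    have ne: "insert i U \<noteq> {l}" if "i \<notin> U" for i l using False that by blast
    have "zeta r c j (insert i U) = 0" if "i \<notin> U" for i
      unfolding zeta_def ext_gen_def using False that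
      by (intro sum.neutral) (use ne in auto)
    then show ?thesis unfolding koszul_d_def by (simp add: ideal_0)
  qed
next
  case (add x y)
  have "koszul_d r f (\<lambda>U. x U + y U) U = koszul_d r f x U + koszul_d r f y U"
    unfolding koszul_d_def sum.distrib[symmetric] by (intro sum.cong) (auto simp: algebra_simps)
  then show ?case using add by (simp add: ideal_add)
next
  case (smult x b)
  have "koszul_d r f (ext_smult b x) U = b * koszul_d r f x U"
    unfolding koszul_d_def ext_smult_def sum_distrib_left by (intro sum.cong) (auto simp: ac_simps)
  then show ?case using smult by (simp add: ideal_mult)
next
  case (mult x y)
  show ?case unfolding leibniz
    by (intro ideal_add wedge_left wedge_right mult.IH)
qed


lemma neg1_sq: "(-1::'a::comm_ring_1) ^ m * (-1) ^ m = 1"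
  by (simp add: power_mult_distrib[symmetric])

lemma wedge_d_top:
  assumes a: "\<forall>j<s. a j = (\<Sum>i<r. c i j * f i)"
  assumes g: "g \<in> Gamma r s c j"
  shows "wedge g (koszul_d r f x) {..<r} \<in> ideal_gen (a ` {..<s})"
proof -
  let ?J = "ideal_gen (a ` {..<s})"
  have gA: "g \<in> Gamma_alg r s c" and gK: "g \<in> koszul r j" using g by (auto simp: Gamma_def)
  have sg: "sigma g = ext_smult ((-1) ^ j) g"
  proof
    fix U show "sigma g U = ext_smult ((-1) ^ j) g U"
      using gK unfolding sigma_def ext_smult_def koszul_def by (cases "g U = 0") auto
  qed
  have z: "koszul_d r f (wedge g x) {..<r} = 0" by (simp add: koszul_d_def)
  define v where "v = wedge (koszul_d r f g) x {..<r}"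
  define w where "w = wedge g (koszul_d r f x) {..<r}"
  define e :: 'a where "e = (-1) ^ j"
  have vw: "v + e * w = 0" using z unfolding leibniz sg wedge_smult v_def w_def e_def .
  have vJ: "v \<in> ?J" unfolding v_def by (rule wedge_left) (rule d_Gamma[OF a gA])
  have ew: "e * w = - v" using vw by (simp add: eq_neg_iff_add_eq_0 add.commute)
  have "w = e * e * w" by (simp add: e_def neg1_sq)
  also have "\<dots> = e * ((-1) * v)" by (simp add: mult.assoc ew)
  finally have "w = e * ((-1) * v)" .
  then show ?thesis unfolding w_def[symmetric] using vJ by (metis ideal_mult)
qed

definition etop :: "nat \<Rightarrow> 'a::comm_ring_1 ext" where
  "etop r = (\<lambda>U. if U = {..<r} then 1 else 0)"

lemma top_comp:
  "wedge (zeta r c k) (koszul_d r f (etop r)) {..<r} = (\<Sum>l<r. c l k * f l)"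
proof -
  let ?T = "{..<r::nat}"
  let ?h = "\<lambda>S. ext_sign S (?T - S) * koszul_d r f (etop r) (?T - S)"
  have "wedge (zeta r c k) (koszul_d r f (etop r)) ?T
      = (\<Sum>S\<in>Pow ?T. \<Sum>l<r. c l k * (if S = {l} then ?h S else 0))"
    unfolding wedge_def zeta_def ext_gen_def
    by (intro sum.cong refl) (simp add: sum_distrib_left sum_distrib_right ac_simps if_distrib cong: if_cong)
  also have "\<dots> = (\<Sum>l<r. \<Sum>S\<in>Pow ?T. c l k * (if S = {l} then ?h S else 0))"
    by (rule sum.swap)
  also have "\<dots> = (\<Sum>l<r. c l k * ?h {l})"
  proof (intro sum.cong refl)
    fix l assume l: "l \<in> {..<r}"
    have "(\<Sum>S\<in>Pow ?T. c l k * (if S = {l} then ?h S else 0)) = c l k * (\<Sum>S\<in>Pow ?T. if S = {l} then ?h S else 0)"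
      by (rule sum_distrib_left[symmetric])
    also have "\<dots> = c l k * ?h {l}" using l by (subst sum.delta) auto
    finally show "(\<Sum>S\<in>Pow ?T. c l k * (if S = {l} then ?h S else 0)) = c l k * ?h {l}" .
  qed
  also have "\<dots> = (\<Sum>l<r. c l k * f l)"
  proof (intro sum.cong refl)
    fix l assume l: "l \<in> {..<r}"
    have e1: "?T - (?T - {l}) = {l}" using l by auto
    have e2: "insert l (?T - {l}) = ?T" using l by auto
    have d: "koszul_d r f (etop r) (?T - {l}) = eps l (?T - {l}) * f l"
      unfolding kd_eps e1 etop_def using e2 by simp
    have s: "ext_sign {l} (?T - {l}) = (eps l (?T - {l}) :: 'a)"
      using L1[of "{}" "?T - {l}" l] by (simp add: ext_sign_inv eps_def inv_cnt_def)
    show "c l k * ?h {l} = c l k * f l"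
      unfolding d s by (simp add: eps_def mult.assoc[symmetric] neg1_sq)
  qed
  finally show ?thesis .
qed


theorem lemma4p21:
  fixes f :: "nat \<Rightarrow> 'a::comm_ring_1" and a :: "nat \<Rightarrow> 'a"
    and c :: "nat \<Rightarrow> nat \<Rightarrow> 'a" and r s :: nat
  assumes "\<forall>j<s. a j = (\<Sum>i<r. c i j * f i)"
  shows "GammaB_top r s f c = ideal_gen (a ` {..<s})"
proof
  let ?J = "ideal_gen (a ` {..<s})"
  let ?S = "{wedge g b | g b j. j \<le> r \<and> g \<in> Gamma r s c j \<and> b \<in> koszul_B r f (r - j)}"
  show "GammaB_top r s f c \<subseteq> ?J"
  proof
    fix z assume "z \<in> GammaB_top r s f c"
    then obtain X where X: "X \<in> ext_span ?S" and z: "z = X {..<r}" unfolding GammaB_top_def by blast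
    then obtain n and a' :: "nat \<Rightarrow> 'a" and g :: "nat \<Rightarrow> 'a ext" where Xe: "X = (\<lambda>U. \<Sum>i<n. a' i * g i U)" and g: "\<forall>i<n. g i \<in> ?S"
      unfolding ext_span_def by blast
    have "g i {..<r} \<in> ?J" if i_lt: "i < n" for i
    proof -
      obtain gg b j where "g i = wedge gg b" "gg \<in> Gamma r s c j" "b \<in> koszul_B r f (r - j)"
        using g i_lt by blast
      moreover then obtain x where "b = koszul_d r f x" unfolding koszul_B_def by blast
      ultimately show ?thesis using wedge_d_top[OF assms] by simp
    qed
    then show "z \<in> ?J" unfolding z Xe by (auto intro!: ideal_sum ideal_mult)
  qed
  show "?J \<subseteq> GammaB_top r s f c"
  proof
    fix z assume "z \<in> ?J"
    then obtain n and a' g :: "nat \<Rightarrow> 'a" where ze: "z = (\<Sum>i<n. a' i * g i)" and g: "\<forall>i<n. g i \<in> a ` {..<s}"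
      unfolding ideal_gen_def by blast
    have "\<forall>i<n. \<exists>k. k < s \<and> g i = a k" using g by blast
    then obtain kk where kk: "\<forall>i<n. kk i < s \<and> g i = a (kk i)" by metis
    show "z \<in> GammaB_top r s f c"
    proof (cases "r = 0")
      case True
      have "z = 0" unfolding ze using kk assms True by simp
      moreover have sp: "(\<lambda>U. \<Sum>i<(0::nat). (0::'a) * ext_one U) \<in> ext_span ?S"
        unfolding ext_span_def
        by (rule CollectI, rule exI[of _ 0], rule exI[of _ "\<lambda>i. 0"], rule exI[of _ "\<lambda>i. ext_one"]) simp
      ultimately show ?thesis unfolding GammaB_top_def by (intro image_eqI[OF _ sp]) simp
    next
      case False
      define G where "G i = wedge (zeta r c (kk i)) (koszul_d r f (etop r))" for i
      have GS: "G i \<in> ?S" if "i < n" for i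
      proof -
        have "zeta r c (kk i) \<in> Gamma r s c 1"
          unfolding Gamma_def koszul_def
        proof (intro IntI CollectI allI impI)
          show "zeta r c (kk i) \<in> Gamma_alg r s c" using kk that by (auto intro: Gamma_alg.gen)
        next
          fix U assume nz: "zeta r c (kk i) U \<noteq> 0"
          have "\<exists>l<r. U = {l}"
          proof (rule ccontr)
            assume "\<not> (\<exists>l<r. U = {l})"
            then have "zeta r c (kk i) U = 0" unfolding zeta_def ext_gen_def by (intro sum.neutral) auto
            with nz show False by simp
          qed
          then obtain l where "l < r" "U = {l}" by blast
          then show "U \<subseteq> {..<r} \<and> card U = 1" by auto
        qed
        moreover have "koszul_d r f (etop r) \<in> koszul_B r f (r - 1)"
          unfolding koszul_B_def
        proof (rule imageI)
          show "etop r \<in> koszul r (Suc (r - 1))" using False unfolding koszul_def etop_def by auto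
        qed
        moreover have "1 \<le> r" using False by simp
        ultimately show ?thesis unfolding G_def by blast
      qed
      have sp: "(\<lambda>U. \<Sum>i<n. a' i * G i U) \<in> ext_span ?S"
        unfolding ext_span_def
        by (rule CollectI, rule exI[of _ n], rule exI[of _ a'], rule exI[of _ G]) (use GS in simp)
      have "z = (\<Sum>i<n. a' i * G i {..<r})"
        unfolding ze G_def top_comp using kk assms by (intro sum.cong refl) auto
      then show ?thesis unfolding GammaB_top_def by (intro image_eqI[OF _ sp]) simp
    qed
  qed
qed

end
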